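(* Let $P>2$ and $L$ be integers and let $\sigma,\tau\in\mathbb{Z}_P$ satisfy: (i) $\sigma,\tau\in\mathbb{Z}_P^{*}$; (ii) $L/2=\mathrm{ord}(\sigma)$; (iii) $2\le \mathrm{ord}(\sigma)$; (iv) $\mathrm{ord}(\sigma)\neq \#\mathbb{Z}_P^{*}$; (v) $1-\sigma^{j}\in\mathbb{Z}_P^{*}$ for all $1\le j<\mathrm{ord}(\sigma)$; (vi) $\tau\notin\{1,\sigma,\sigma^2,\dots,\sigma^{\mathrm{ord}(\sigma)-1}\}$. Define the $2P\times LP$ binary matrices $\hat H_C=(I(c_{j,\ell}))_{0\le j<2,\,0\le \ell<L}$ and $\hat H_D=(I(d_{j,\ell}))_{0\le j<2,\,0\le \ell<L}$ (block matrices with $P\times P$ blocks), where, with all arithmetic in $\mathbb{Z}_P$, $c_{j,\ell}=\sigma^{\ell-j}$ for $0\le\ell<L/2$ and $c_{j,\ell}=\tau\sigma^{\ell-j}$ for $L/2\le \ell<L$; $d_{j,\ell}=-\tau\sigma^{j-\ell}$ for $0\le\ell<L/2$ and $d_{j,\ell}=-\sigma^{j-\ell}$ for $L/2\le\ell<L$. Write $\hat H_C=(\hat c_{m,n})$, $\hat H_D=(\hat d_{m,n})$ with $0\le m<2P$, $0\le n<LP$. For a row index $0\le m'<2P$, let $N(m')=\{0\le n<LP \mid \hat d_{m',n}\neq 0\}$ (the support of the $m'$-th row of $\hat H_D$) and $E(m')=\{(m,n)\mid \hat c_{m,n}\neq 0,\ n\in N(m')\}$. Then for every $0\le m'<2P$,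 the $L$ variable nodes of the Tanner graph of $\hat H_C$ corresponding to the columns in $N(m')$, together with their adjacent check nodes, form a cycle of length $2L$. More precisely, there exist $L$ distinct row indices $m_0,\dots,m_{L-1}$ and $L$ distinct column indices $n_0,\dots,n_{L-1}$ such that $$\{(m_{2i-1},n_{2i}),\ (m_{2i},n_{2i}),\ (m_{2i},n_{2i+1}),\ (m_{2i+1},n_{2i+1}) \mid 0\le i<L/2\}=E(m'),$$ where $m_{-1}:=m_{L-1}$.
   Context: Rows and columns are indexed from $0$. $\mathbb{Z}_P^{*}=\{z\in\mathbb{Z}_P\mid \exists a\in\mathbb{Z}_P,\ za=1\}$ is the group of units of $\mathbb{Z}_P$, and $\mathrm{ord}(\sigma)=\min\{m>0\mid \sigma^m=1\}$; negative powers of $\sigma$ are taken in $\mathbb{Z}_P^{*}$. $I(1)$ is the $P\times P$ binary cyclic permutation matrix whose $r$-th row has its single $1$ in column $r+1 \bmod P$, and $I(c):=I(1)^{c}$ for $c\in\mathbb{Z}_P$ (so row $r$ of $I(c)$ has its single $1$ in column $r+c\bmod P$). The Tanner graph of a binary matrix $H$ is the bipartite graph with one check node per row, one variable node per column, and an edge between check node $m$ and variable node $n$ iff the $(m,n)$ entry of $H$ is nonzero. *)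

theory Defs
  imports "HOL-Number_Theory.Cong"
begin

text \<open>Elements of Z_P are represented by integers in {0..<P}; arithmetic is taken mod P.\<close>

definition zunit :: "nat \<Rightarrow> int \<Rightarrow> bool" where
  "zunit P z \<longleftrightarrow> (\<exists>a::int. [z * a = 1] (mod int P))"

definition zord :: "nat \<Rightarrow> int \<Rightarrow> nat" where
  "zord P s = (LEAST m. m > 0 \<and> [s ^ m = 1] (mod int P))"

definition zinv :: "nat \<Rightarrow> int \<Rightarrow> int" where
  "zinv P s = (SOME a. 0 \<le> a \<and> a < int P \<and> [s * a = 1] (mod int P))"

definition zpow :: "nat \<Rightarrow> int \<Rightarrow> int \<Rightarrow> int" where
  "zpow P s k = (if k \<ge> 0 then s ^ nat k mod int P else (zinv P s) ^ nat (- k) mod int P)"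

text \<open>Entry (r,k) of the P x P circulant permutation matrix I(c): 1 iff k = r + c mod P.\<close>
definition circ :: "nat \<Rightarrow> int \<Rightarrow> nat \<Rightarrow> nat \<Rightarrow> nat" where
  "circ P c r k = (if int k = (int r + c) mod int P then 1 else 0)"

definition blockmat :: "nat \<Rightarrow> (nat \<Rightarrow> nat \<Rightarrow> int) \<Rightarrow> nat \<Rightarrow> nat \<Rightarrow> nat" where
  "blockmat P e m n = circ P (e (m div P) (n div P)) (m mod P) (n mod P)"

definition cexp :: "nat \<Rightarrow> nat \<Rightarrow> int \<Rightarrow> int \<Rightarrow> nat \<Rightarrow> nat \<Rightarrow> int" where
  "cexp P L s t j l = (if l < L div 2 then zpow P s (int l - int j)
                       else (t * zpow P s (int l - int j)) mod int P)"

definition dexp :: "nat \<Rightarrow> nat \<Rightarrow> int \<Rightarrow> int \<Rightarrow> nat \<Rightarrow> nat \<Rightarrow> int" where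
  "dexp P L s t j l = (if l < L div 2 then (- (t * zpow P s (int j - int l))) mod int P
                       else (- zpow P s (int j - int l)) mod int P)"

definition HC :: "nat \<Rightarrow> nat \<Rightarrow> int \<Rightarrow> int \<Rightarrow> nat \<Rightarrow> nat \<Rightarrow> nat" where
  "HC P L s t = blockmat P (cexp P L s t)"

definition HD :: "nat \<Rightarrow> nat \<Rightarrow> int \<Rightarrow> int \<Rightarrow> nat \<Rightarrow> nat \<Rightarrow> nat" where
  "HD P L s t = blockmat P (dexp P L s t)"

definition Nsupp :: "nat \<Rightarrow> nat \<Rightarrow> int \<Rightarrow> int \<Rightarrow> nat \<Rightarrow> nat set" where
  "Nsupp P L s t m' = {n. n < L * P \<and> HD P L s t m' n \<noteq> 0}"

definition Eset :: "nat \<Rightarrow> nat \<Rightarrow> int \<Rightarrow> int \<Rightarrow> nat \<Rightarrow> (nat \<times> nat) set" where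
  "Eset P L s t m' = {(m, n). m < 2 * P \<and> n < L * P \<and> HC P L s t m n \<noteq> 0 \<and> n \<in> Nsupp P L s t m'}"

end

theory Submission
  imports Defs "HOL-Number_Theory.Number_Theory"
begin

lemma zunit_coprime: "zunit P z \<longleftrightarrow> coprime z (int P)"
  by (simp add: zunit_def coprime_iff_invertible_int)

locale cyc =
  fixes P :: nat and s t :: int and K L :: nat
  assumes hP: "P > 2" and hs: "0 \<le> s" "s < int P" and ht: "0 \<le> t" "t < int P"
    and us: "zunit P s" and ut: "zunit P t"
    and K: "K = zord P s" and L: "L = 2 * K" and K2: "2 \<le> K"
    and v: "\<forall>j. 1 \<le> j \<and> j < K \<longrightarrow> zunit P ((1 - s ^ j) mod int P)"
    and vi: "t \<notin> {s ^ k mod int P | k. k < K}"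
begin

lemma cops: "coprime s (int P)" using us by (simp add: zunit_coprime)

lemma sK: "[s ^ K = 1] (mod int P)"
proof -
  have r: "residues (int P)" using hP by (simp add: residues_def)
  have e: "[s ^ totient P = 1] (mod int P)" using residues.euler_theorem[OF r cops] by simp
  have ex: "\<exists>m. m > 0 \<and> [s ^ m = 1] (mod int P)" using e hP by (intro exI[of _ "totient P"]) auto
  show ?thesis unfolding K zord_def by (rule LeastI2_ex[OF ex]) auto
qed

lemma Kpos: "K > 0" using K2 by simp

lemma pow_mod: "[s ^ n = s ^ (n mod K)] (mod int P)"
proof -
  have "s ^ n = s ^ (K * (n div K) + n mod K)" by simp
  also have "\<dots> = (s ^ K) ^ (n div K) * s ^ (n mod K)"
    by (simp only: power_add power_mult)
  also have "[\<dots> = 1 ^ (n div K) * s ^ (n mod K)] (mod int P)"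
    by (intro cong_mult cong_pow sK cong_refl)
  finally show ?thesis by simp
qed

lemma zinv1: "[s * zinv P s = 1] (mod int P)"
proof -
  have ex: "\<exists>a. 0 \<le> a \<and> a < int P \<and> [s * a = 1] (mod int P)"
  proof (intro exI conjI)
    show "0 \<le> s ^ (K - 1) mod int P" using hP by simp
    show "s ^ (K - 1) mod int P < int P" using hP by simp
    have "s * s ^ (K - 1) = s ^ K" using Kpos by (simp add: power_eq_if)
    then show "[s * (s ^ (K - 1) mod int P) = 1] (mod int P)"
      using sK by (metis cong_def mod_mult_right_eq)
  qed
  show ?thesis unfolding zinv_def by (rule someI2_ex[OF ex]) auto
qed

lemma zinv2: "[zinv P s = s ^ (K - 1)] (mod int P)"
proof -
  have "[zinv P s = zinv P s * s ^ K] (mod int P)"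
    using cong_scalar_left[OF sK, of "zinv P s"] by (simp add: cong_sym)
  also have "zinv P s * s ^ K = (s * zinv P s) * s ^ (K - 1)" using Kpos
    by (simp add: power_eq_if)
  also have "[\<dots> = 1 * s ^ (K - 1)] (mod int P)"
    by (intro cong_mult zinv1 cong_refl)
  finally show ?thesis by simp
qed

definition pw :: "int \<Rightarrow> int" where "pw k = s ^ nat (k mod int K)"

lemma pw_dvd: "int K dvd (x - y) \<Longrightarrow> pw x = pw y"
proof -
  assume "int K dvd (x - y)"
  then have "x mod int K = y mod int K" by (metis mod_eq_dvd_iff)
  then show ?thesis unfolding pw_def by simp
qed

lemma pw_nat: "[pw (int n) = s ^ n] (mod int P)"
proof -
  have "nat (int n mod int K) = n mod K" by (simp add: nat_mod_as_int)
  then show ?thesis unfolding pw_def using pow_mod by (simp add: cong_sym)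
qed

lemma pw_nat_less: "n < K \<Longrightarrow> pw (int n) = s ^ n"
  unfolding pw_def by simp

lemma pw_add: "[pw (a + b) = pw a * pw b] (mod int P)"
proof -
  have "pw a * pw b = s ^ (nat (a mod int K) + nat (b mod int K))"
    unfolding pw_def by (simp add: power_add)
  also have "[\<dots> = s ^ ((nat (a mod int K) + nat (b mod int K)) mod K)] (mod int P)"
    by (rule pow_mod)
  also have "(nat (a mod int K) + nat (b mod int K)) mod K = nat ((a + b) mod int K)"
  proof -
    have "int ((nat (a mod int K) + nat (b mod int K)) mod K) = (a mod int K + b mod int K) mod int K"
      using Kpos by (simp add: zmod_int)
    also have "\<dots> = (a + b) mod int K" by (simp add: mod_add_eq)
    finally show ?thesis by (metis nat_int)
  qed
  finally show ?thesis unfolding pw_def by (simp add: cong_sym)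
qed

lemma pw_unit: "coprime (pw k) (int P)"
  unfolding pw_def using cops by simp

lemma zpow_pw: "[zpow P s k = pw k] (mod int P)"
proof (cases "k \<ge> 0")
  case True
  then have "int (nat k) = k" by simp
  then show ?thesis unfolding zpow_def using True pw_nat[of "nat k"] by (simp add: cong_sym)
next
  case False
  define n where "n = nat (- k)"
  have "zpow P s k = zinv P s ^ n mod int P" unfolding zpow_def n_def using False by simp
  also have "[\<dots> = (s ^ (K - 1)) ^ n] (mod int P)"
    using cong_pow[OF zinv2] by simp
  also have "(s ^ (K - 1)) ^ n = s ^ ((K - 1) * n)" by (simp add: power_mult)
  also have "[\<dots> = pw (int ((K - 1) * n))] (mod int P)" by (rule cong_sym[OF pw_nat])
  also have "pw (int ((K - 1) * n)) = pw k"
  proof (rule pw_dvd)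
    have "int ((K - 1) * n) - k = int K * (- k)" using False Kpos unfolding n_def
      by (simp add: of_nat_diff algebra_simps)
    then show "int K dvd (int ((K - 1) * n) - k)" by simp
  qed
  finally show ?thesis .
qed


lemma LK: "L div 2 = K" using L by simp

lemma pw_eqI: "x = y + int K * c \<Longrightarrow> pw x = pw y"
  by (rule pw_dvd) simp

lemma cexp_lo: "l < K \<Longrightarrow> [cexp P L s t j l = pw (int l - int j)] (mod int P)"
  unfolding cexp_def LK using zpow_pw by simp

lemma cexp_hi: "K \<le> l \<Longrightarrow> [cexp P L s t j l = t * pw (int l - int j)] (mod int P)"
  unfolding cexp_def LK using cong_scalar_left[OF zpow_pw] by simp

lemma dexp_lo: "l < K \<Longrightarrow> [dexp P L s t jj l = - (t * pw (int jj - int l))] (mod int P)"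
  unfolding dexp_def LK using cong_uminus[OF cong_scalar_left[OF zpow_pw]] by simp

lemma dexp_hi: "K \<le> l \<Longrightarrow> [dexp P L s t jj l = - pw (int jj - int l)] (mod int P)"
  unfolding dexp_def LK using cong_uminus[OF zpow_pw] by simp

definition Dv :: "nat \<Rightarrow> nat \<Rightarrow> nat \<Rightarrow> int" where
  "Dv jj j l = dexp P L s t jj l - cexp P L s t j l"

lemma Dv_lo: "l < K \<Longrightarrow> [Dv jj j l = - (t * pw (int jj - int l)) - pw (int l - int j)] (mod int P)"
  unfolding Dv_def by (intro cong_diff dexp_lo cexp_lo)

lemma Dv_hi: "K \<le> l \<Longrightarrow> [Dv jj j l = - pw (int jj - int l) - t * pw (int l - int j)] (mod int P)"
  unfolding Dv_def by (intro cong_diff dexp_hi cexp_hi)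

definition u :: "nat \<Rightarrow> nat \<Rightarrow> nat" where
  "u jj i = nat ((int jj - int i) mod int K)"

lemma u_lt: "u jj i < K"
  unfolding u_def using Kpos by (simp add: nat_less_iff)

lemma u_eq: "\<exists>q. int (u jj i) = int jj - int i + int K * q"
proof -
  have "int (u jj i) = (int jj - int i) mod int K" unfolding u_def using Kpos by simp
  also have "\<dots> = int jj - int i + int K * (- ((int jj - int i) div int K))"
    by (simp add: algebra_simps mod_div_mult_eq minus_div_mult_eq_mod[symmetric])
  finally show ?thesis by blast
qed

lemma B0: "[Dv jj 0 (K + u jj i) = Dv jj 0 i] (mod int P)" if "i < K"
proof -
  obtain q where q: "int (u jj i) = int jj - int i + int K * q" using u_eq by blast
  have "[Dv jj 0 (K + u jj i) = - pw (int jj - int (K + u jj i)) - t * pw (int (K + u jj i) - int 0)] (mod int P)"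
    by (rule Dv_hi) simp
  also have "pw (int jj - int (K + u jj i)) = pw (int i)"
    by (rule pw_eqI[where c = "- q - 1"]) (simp add: q algebra_simps)
  also have "pw (int (K + u jj i) - int 0) = pw (int jj - int i)"
    by (rule pw_eqI[where c = "q + 1"]) (simp add: q algebra_simps)
  also have "- pw (int i) - t * pw (int jj - int i) = - (t * pw (int jj - int i)) - pw (int i - int 0)"
    by simp
  also have "[\<dots> = Dv jj 0 i] (mod int P)"
    by (rule cong_sym[OF Dv_lo[OF that]])
  finally show ?thesis .
qed

lemma B1: "[Dv jj 1 (K + u jj i) = Dv jj 1 ((i + 1) mod K)] (mod int P)" if "i < K"
proof -
  obtain q where q: "int (u jj i) = int jj - int i + int K * q" using u_eq by blast
  define i' where "i' = (i + 1) mod K"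
  have i'l: "i' < K" unfolding i'_def using Kpos by simp
  obtain q' where q': "int i' = int i + 1 + int K * q'"
  proof -
    have "int i' = (int i + 1) mod int K" unfolding i'_def by (simp add: zmod_int add.commute)
    also have "\<dots> = int i + 1 + int K * (- ((int i + 1) div int K))"
      by (simp add: algebra_simps mod_div_mult_eq minus_div_mult_eq_mod[symmetric])
    finally show ?thesis using that by blast
  qed
  have "[Dv jj 1 (K + u jj i) = - pw (int jj - int (K + u jj i)) - t * pw (int (K + u jj i) - int 1)] (mod int P)"
    by (rule Dv_hi) simp
  also have "pw (int jj - int (K + u jj i)) = pw (int i' - int 1)"
    by (rule pw_eqI[where c = "- q - 1 - q'"]) (simp add: q q' algebra_simps)
  also have "pw (int (K + u jj i) - int 1) = pw (int jj - int i')"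
    by (rule pw_eqI[where c = "q + 1 + q'"]) (simp add: q q' algebra_simps)
  also have "- pw (int i' - int 1) - t * pw (int jj - int i') = - (t * pw (int jj - int i')) - pw (int i' - int 1)"
    by simp
  also have "[\<dots> = Dv jj 1 i'] (mod int P)"
    by (rule cong_sym[OF Dv_lo[OF i'l]])
  finally show ?thesis unfolding i'_def .
qed

lemma pw3: "[pw x * pw y * pw z = pw (x + y + z)] (mod int P)"
proof -
  have "[pw x * pw y * pw z = pw (x + y) * pw z] (mod int P)"
    by (intro cong_mult cong_sym[OF pw_add] cong_refl)
  also have "[pw (x + y) * pw z = pw (x + y + z)] (mod int P)" by (rule cong_sym[OF pw_add])
  finally show ?thesis .
qed

lemma cop_diff: "coprime (pw (int i) - pw (int i')) (int P)" if "i < i'" "i' < K"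
proof -
  have "pw (int i) - pw (int i') = s ^ i * (1 - s ^ (i' - i))"
    using that by (simp add: pw_nat_less algebra_simps power_add[symmetric])
  moreover have "coprime (1 - s ^ (i' - i)) (int P)"
  proof -
    have "1 \<le> i' - i \<and> i' - i < K" using that by auto
    then have "zunit P ((1 - s ^ (i' - i)) mod int P)" using v by blast
    then show ?thesis using hP by (simp add: zunit_coprime)
  qed
  ultimately show ?thesis using cops by simp
qed

lemma C: "i = i'" if "i < K" "i' < K" "[Dv jj j i = Dv jj j i'] (mod int P)"
proof (rule ccontr)
  assume ne: "i \<noteq> i'"
  define W where "W = pw (int i + int i' - int j - int jj)"
  have e0: "[- (t * pw (int jj - int i)) - pw (int i - int j) = - (t * pw (int jj - int i')) - pw (int i' - int j)] (mod int P)"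
    using cong_trans[OF cong_trans[OF cong_sym[OF Dv_lo[OF that(1)]] that(3)] Dv_lo[OF that(2)]] .
  have key: "[(- (t * pw (int jj - int a)) - pw (int a - int j)) * (pw (int j) * W) = - (t * pw (int b)) - pw (int a) * W] (mod int P)"
    if "a = i \<and> b = i' \<or> a = i' \<and> b = i" for a b
  proof -
    have A: "[pw (int jj - int a) * pw (int j) * W = pw (int b)] (mod int P)"
    proof -
      have "[pw (int jj - int a) * pw (int j) * W = pw (int jj - int a + int j + (int i + int i' - int j - int jj))] (mod int P)"
        unfolding W_def by (rule pw3)
      also have "int jj - int a + int j + (int i + int i' - int j - int jj) = int b" using that by auto
      finally show ?thesis .
    qed
    have B: "[pw (int a - int j) * pw (int j) = pw (int a)] (mod int P)"
      using cong_sym[OF pw_add[of "int a - int j" "int j"]] by simp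
    have "(- (t * pw (int jj - int a)) - pw (int a - int j)) * (pw (int j) * W)
        = - (t * (pw (int jj - int a) * pw (int j) * W)) - (pw (int a - int j) * pw (int j)) * W"
      by (simp add: algebra_simps)
    also have "[\<dots> = - (t * pw (int b)) - pw (int a) * W] (mod int P)"
      by (intro cong_diff cong_uminus cong_scalar_left cong_scalar_right A B)
    finally show ?thesis .
  qed
  note e1 = cong_scalar_right[OF e0, of "pw (int j) * W"]
  have e2: "[- (t * pw (int i')) - pw (int i) * W = - (t * pw (int i)) - pw (int i') * W] (mod int P)"
    using cong_trans[OF cong_trans[OF cong_sym[OF key[of i i']] e1] key[of i' i]] by simp
  then have "int P dvd ((- (t * pw (int i')) - pw (int i) * W) - (- (t * pw (int i)) - pw (int i') * W))"
    by (simp add: cong_iff_dvd_diff)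
  also have "(- (t * pw (int i')) - pw (int i) * W) - (- (t * pw (int i)) - pw (int i') * W)
      = (W - t) * (pw (int i') - pw (int i))" by (simp add: algebra_simps)
  finally have d: "int P dvd (W - t) * (pw (int i') - pw (int i))" .
  have cop: "coprime (int P) (pw (int i') - pw (int i))"
  proof (cases "i < i'")
    case True
    have "pw (int i') - pw (int i) = - (pw (int i) - pw (int i'))" by simp
    then show ?thesis using cop_diff[OF True that(2)]
      by (metis coprime_commute coprime_minus_left_iff)
  next
    case False
    then have "i' < i" using ne by simp
    then show ?thesis using cop_diff[OF _ that(1)] by (simp add: coprime_commute)
  qed
  have "int P dvd (W - t)" using d coprime_dvd_mult_left_iff[OF cop] by simp
  then have "W mod int P = t mod int P" by (simp add: mod_eq_dvd_iff)
  then have tW: "t = s ^ nat ((int i + int i' - int j - int jj) mod int K) mod int P"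
    using ht unfolding W_def pw_def by simp
  have "nat ((int i + int i' - int j - int jj) mod int K) < K" using Kpos by (simp add: nat_less_iff)
  then show False using vi tW by blast
qed


lemma Ppos: "P > 0" using hP by simp

definition col :: "nat \<Rightarrow> nat \<Rightarrow> nat \<Rightarrow> nat" where
  "col jj a l = l * P + nat ((int a + dexp P L s t jj l) mod int P)"

definition row :: "nat \<Rightarrow> nat \<Rightarrow> nat \<Rightarrow> nat \<Rightarrow> nat" where
  "row jj a j l = j * P + nat ((int a + Dv jj j l) mod int P)"

lemma natmod_lt: "nat (x mod int P) < P" using Ppos by (simp add: nat_less_iff)

lemma col_div: "col jj a l div P = l" and col_mod: "col jj a l mod P = nat ((int a + dexp P L s t jj l) mod int P)"
  unfolding col_def using natmod_lt Ppos by auto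

lemma row_div: "row jj a j l div P = j" and row_mod: "row jj a j l mod P = nat ((int a + Dv jj j l) mod int P)"
  unfolding row_def using natmod_lt Ppos by auto

lemma col_lt: "l < L \<Longrightarrow> col jj a l < L * P"
proof -
  assume "l < L"
  then have "l * P + P \<le> L * P" by (metis Suc_leI mult_Suc mult_le_mono1 add.commute)
  then show ?thesis unfolding col_def using natmod_lt[of "int a + dexp P L s t jj l"] by linarith
qed

lemma row_lt: "j < 2 \<Longrightarrow> row jj a j l < 2 * P"
proof -
  assume "j < 2"
  then have "j * P + P \<le> 2 * P" by (metis Suc_leI mult_Suc mult_le_mono1 add.commute)
  then show ?thesis unfolding row_def using natmod_lt[of "int a + Dv jj j l"] by linarith
qed

lemma row_cong: "[Dv jj j l = Dv jj j l'] (mod int P) \<Longrightarrow> row jj a j l = row jj a j l'"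
  unfolding row_def cong_def by (metis mod_add_right_eq)

lemma row_eq: "row jj a j l = row jj a j' l' \<Longrightarrow> j = j' \<and> [Dv jj j l = Dv jj j' l'] (mod int P)"
proof -
  assume h: "row jj a j l = row jj a j' l'"
  have "j = j'" using arg_cong[OF h, of "\<lambda>x. x div P"] by (simp add: row_div)
  moreover have "nat ((int a + Dv jj j l) mod int P) = nat ((int a + Dv jj j' l') mod int P)"
    using arg_cong[OF h, of "\<lambda>x. x mod P"] by (simp add: row_mod)
  then have "(int a + Dv jj j l) mod int P = (int a + Dv jj j' l') mod int P"
    using Ppos by (simp add: nat_eq_iff)
  then have "[int a + Dv jj j l = int a + Dv jj j' l'] (mod int P)" by (simp add: cong_def)
  then have "[Dv jj j l = Dv jj j' l'] (mod int P)" by (simp add: cong_add_lcancel)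
  ultimately show ?thesis by simp
qed

lemma Nsupp_char: "Nsupp P L s t m' = col (m' div P) (m' mod P) ` {..<L}"
proof -
  have HD: "HD P L s t m' n \<noteq> 0 \<longleftrightarrow> int (n mod P) = (int (m' mod P) + dexp P L s t (m' div P) (n div P)) mod int P" for n
    unfolding HD_def blockmat_def circ_def by simp
  show ?thesis
  proof (intro Set.set_eqI iffI)
    fix n assume "n \<in> Nsupp P L s t m'"
    then have n: "n < L * P" "int (n mod P) = (int (m' mod P) + dexp P L s t (m' div P) (n div P)) mod int P"
      unfolding Nsupp_def using HD by auto
    have l: "n div P < L" using n(1) by (simp add: less_mult_imp_div_less)
    have "col (m' div P) (m' mod P) (n div P) = n div P * P + n mod P"
      unfolding col_def using n(2)[symmetric] by simp
    also have "\<dots> = n" by simp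
    finally show "n \<in> col (m' div P) (m' mod P) ` {..<L}" using l by force
  next
    fix n assume "n \<in> col (m' div P) (m' mod P) ` {..<L}"
    then obtain l where l: "l < L" "n = col (m' div P) (m' mod P) l" by auto
    have "n < L * P" using l col_lt by simp
    moreover have "HD P L s t m' n \<noteq> 0"
      unfolding HD l(2) col_div col_mod using Ppos by simp
    ultimately show "n \<in> Nsupp P L s t m'" unfolding Nsupp_def by simp
  qed
qed

lemma Eset_char: "m' < 2 * P \<Longrightarrow> Eset P L s t m' =
   {(row (m' div P) (m' mod P) j l, col (m' div P) (m' mod P) l) | j l. j < 2 \<and> l < L}"
proof -
  assume m': "m' < 2 * P"
  define jj where "jj = m' div P"
  define a where "a = m' mod P"
  have HC: "HC P L s t m n \<noteq> 0 \<longleftrightarrow> int (n mod P) = (int (m mod P) + cexp P L s t (m div P) (n div P)) mod int P" for m n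
    unfolding HC_def blockmat_def circ_def by simp
  show ?thesis unfolding jj_def[symmetric] a_def[symmetric]
  proof (intro Set.set_eqI iffI)
    fix x assume "x \<in> Eset P L s t m'"
    then obtain m n where x: "x = (m, n)" "m < 2 * P" "HC P L s t m n \<noteq> 0" "n \<in> Nsupp P L s t m'"
      unfolding Eset_def by auto
    obtain l where l: "l < L" "n = col jj a l" using x(4) Nsupp_char unfolding jj_def a_def by auto
    define j where "j = m div P"
    have j: "j < 2" unfolding j_def using x(2) by (simp add: less_mult_imp_div_less)
    have e: "(int a + dexp P L s t jj l) mod int P = (int (m mod P) + cexp P L s t j l) mod int P"
      using x(3) unfolding HC l(2) col_div col_mod j_def using Ppos by simp
    have "int (m mod P) = int (m mod P) mod int P" using Ppos by simp
    also have "\<dots> = ((int (m mod P) + cexp P L s t j l) - cexp P L s t j l) mod int P" by simp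
    also have "\<dots> = ((int a + dexp P L s t jj l) - cexp P L s t j l) mod int P"
      using e by (metis mod_diff_left_eq)
    also have "\<dots> = (int a + Dv jj j l) mod int P" unfolding Dv_def by (simp add: algebra_simps)
    finally have "m mod P = nat ((int a + Dv jj j l) mod int P)" by simp
    then have "m = row jj a j l" unfolding row_def j_def by (metis div_mult_mod_eq)
    then show "x \<in> {(row jj a j l, col jj a l) | j l. j < 2 \<and> l < L}" using x(1) l j by auto
  next
    fix x assume "x \<in> {(row jj a j l, col jj a l) | j l. j < 2 \<and> l < L}"
    then obtain j l where x: "x = (row jj a j l, col jj a l)" "j < 2" "l < L" by auto
    have "col jj a l \<in> Nsupp P L s t m'" using Nsupp_char x(3) unfolding jj_def a_def by auto
    moreover have "HC P L s t (row jj a j l) (col jj a l) \<noteq> 0"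
    proof -
      have "(int (nat ((int a + Dv jj j l) mod int P)) + cexp P L s t j l) mod int P
          = ((int a + Dv jj j l) mod int P + cexp P L s t j l) mod int P" using Ppos by simp
      also have "\<dots> = (int a + Dv jj j l + cexp P L s t j l) mod int P" by (simp add: mod_add_left_eq)
      also have "\<dots> = (int a + dexp P L s t jj l) mod int P" unfolding Dv_def by simp
      finally show ?thesis unfolding HC row_div row_mod col_div col_mod using Ppos by simp
    qed
    ultimately show "x \<in> Eset P L s t m'" unfolding Eset_def x(1)
      using row_lt[OF x(2)] col_lt[OF x(3)] by simp
  qed
qed


lemma u_inj: "x < K \<Longrightarrow> y < K \<Longrightarrow> u jj x = u jj y \<Longrightarrow> x = y"
proof -
  assume xy: "x < K" "y < K" "u jj x = u jj y"
  obtain q where q: "int (u jj x) = int jj - int x + int K * q" using u_eq by blast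
  obtain q' where q': "int (u jj y) = int jj - int y + int K * q'" using u_eq by blast
  have "int x - int y = int K * (q - q')" using q q' xy(3) by (simp add: algebra_simps)
  then have "int K dvd (int x - int y)" by simp
  then have "int x mod int K = int y mod int K" by (metis mod_eq_dvd_iff)
  then show "x = y" using xy by simp
qed

lemma u_u: "w < K \<Longrightarrow> u jj (u jj w) = w"
proof -
  assume w: "w < K"
  obtain q where q: "int (u jj w) = int jj - int w + int K * q" using u_eq by blast
  have "int (u jj (u jj w)) = (int jj - int (u jj w)) mod int K" unfolding u_def using Kpos by simp
  also have "int jj - int (u jj w) = int w + int K * (- q)" using q by simp
  also have "(int w + int K * (- q)) mod int K = int w mod int K" by (rule mod_mult_self2)
  also have "\<dots> = int w" using w by simp
  finally show ?thesis by simp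
qed

lemma suc_mod_inj: "x < K \<Longrightarrow> y < K \<Longrightarrow> (x + 1) mod K = (y + 1) mod K \<Longrightarrow> x = y"
proof -
  assume h: "x < K" "y < K" "(x + 1) mod K = (y + 1) mod K"
  have ex: "(z + 1) mod K = (if z + 1 = K then 0 else z + 1)" if "z < K" for z
    using that by auto
  show "x = y" using h ex[OF h(1)] ex[OF h(2)] by (auto split: if_splits)
qed

theorem main:
  assumes m': "m' < 2 * P"
  shows "\<exists>ms ns :: nat \<Rightarrow> nat.
           inj_on ms {..<L} \<and> inj_on ns {..<L} \<and>
           (\<forall>i<L. ms i < 2 * P \<and> ns i < L * P) \<and>
           (\<Union>i<L div 2. {(ms ((2*i + L - 1) mod L), ns (2*i)), (ms (2*i), ns (2*i)),
                          (ms (2*i), ns (2*i+1)), (ms (2*i+1), ns (2*i+1))})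
           = Eset P L s t m'"
proof -
  define jj where "jj = m' div P"
  define a where "a = m' mod P"
  define R where "R = row jj a"
  define Cc where "Cc = col jj a"
  define ms where "ms k = (if even k then R 0 (k div 2) else R 1 ((k div 2 + 1) mod K))" for k
  define ns where "ns k = (if even k then Cc (k div 2) else Cc (K + u jj (k div 2)))" for k
  have kK: "k < L \<Longrightarrow> k div 2 < K" for k using L by simp
  have Rcong: "[Dv jj j l = Dv jj j l'] (mod int P) \<Longrightarrow> R j l = R j l'" for j l l'
    unfolding R_def by (rule row_cong)
  have Req: "R j l = R j' l' \<Longrightarrow> j = j' \<and> [Dv jj j l = Dv jj j' l'] (mod int P)" for j l j' l'
    unfolding R_def by (rule row_eq)
  have inj1: "inj_on ms {..<L}"
  proof (rule inj_onI)
    fix k k' assume k: "k \<in> {..<L}" "k' \<in> {..<L}" "ms k = ms k'"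
    have kk: "k div 2 < K" "k' div 2 < K" using k kK by auto
    show "k = k'"
    proof (cases "even k"; cases "even k'")
      assume e: "even k" "even k'"
      then have "R 0 (k div 2) = R 0 (k' div 2)" using k(3) unfolding ms_def by simp
      then have "[Dv jj 0 (k div 2) = Dv jj 0 (k' div 2)] (mod int P)" by (rule conjunct2[OF Req])
      then have "k div 2 = k' div 2" by (rule C[OF kk])
      then show ?thesis using e by presburger
    next
      assume e: "even k" "odd k'"
      then have "R 0 (k div 2) = R 1 ((k' div 2 + 1) mod K)" using k(3) unfolding ms_def by simp
      then have "(0::nat) = 1" by (rule conjunct1[OF Req])
      then show ?thesis by simp
    next
      assume e: "odd k" "even k'"
      then have "R 1 ((k div 2 + 1) mod K) = R 0 (k' div 2)" using k(3) unfolding ms_def by simp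
      then have "(1::nat) = 0" by (rule conjunct1[OF Req])
      then show ?thesis by simp
    next
      assume e: "odd k" "odd k'"
      then have "R 1 ((k div 2 + 1) mod K) = R 1 ((k' div 2 + 1) mod K)" using k(3) unfolding ms_def by simp
      then have "[Dv jj 1 ((k div 2 + 1) mod K) = Dv jj 1 ((k' div 2 + 1) mod K)] (mod int P)" by (rule conjunct2[OF Req])
      then have "(k div 2 + 1) mod K = (k' div 2 + 1) mod K" by (rule C[OF mod_less_divisor[OF Kpos] mod_less_divisor[OF Kpos]])
      then have "k div 2 = k' div 2" by (rule suc_mod_inj[OF kk])
      then show ?thesis using e by presburger
    qed
  qed
  have inj2: "inj_on ns {..<L}"
  proof (rule inj_onI)
    fix k k' assume k: "k \<in> {..<L}" "k' \<in> {..<L}" "ns k = ns k'"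
    have kk: "k div 2 < K" "k' div 2 < K" using k kK by auto
    define f where "f k = (if even k then k div 2 else K + u jj (k div 2))" for k
    have "ns k = Cc (f k)" "ns k' = Cc (f k')" unfolding ns_def f_def by auto
    then have "col jj a (f k) div P = col jj a (f k') div P" using k(3) unfolding Cc_def by simp
    then have fe: "f k = f k'" by (simp only: col_div)
    show "k = k'"
    proof (cases "even k"; cases "even k'")
      assume e: "even k" "even k'"
      then show ?thesis using fe unfolding f_def by (metis dvd_mult_div_cancel)
    next
      assume e: "even k" "odd k'"
      then show ?thesis using fe kk unfolding f_def by simp
    next
      assume e: "odd k" "even k'"
      then show ?thesis using fe kk unfolding f_def by simp
    next
      assume e: "odd k" "odd k'"
      then have "k div 2 = k' div 2" using fe kk u_inj unfolding f_def by simp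
      then show ?thesis using e by (metis odd_two_times_div_two_succ)
    qed
  qed
  have bnd: "\<forall>i<L. ms i < 2 * P \<and> ns i < L * P"
  proof (intro allI impI conjI)
    fix i assume i: "i < L"
    show "ms i < 2 * P" unfolding ms_def R_def using row_lt by simp
    have "K + u jj (i div 2) < L" using u_lt L by (simp add: less_diff_conv)
    moreover have "i div 2 < L" using i by simp
    ultimately show "ns i < L * P" unfolding ns_def Cc_def using col_lt by simp
  qed
  have blk: "{(ms ((2*i + L - 1) mod L), ns (2*i)), (ms (2*i), ns (2*i)),
              (ms (2*i), ns (2*i+1)), (ms (2*i+1), ns (2*i+1))}
           = {(R 1 i, Cc i), (R 0 i, Cc i), (R 0 (K + u jj i), Cc (K + u jj i)), (R 1 (K + u jj i), Cc (K + u jj i))}"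
    if i: "i < K" for i
  proof -
    have m1: "ms ((2*i + L - 1) mod L) = R 1 i"
    proof (cases "i = 0")
      case True
      have "(2*i + L - 1) mod L = 2 * (K - 1) + 1" using True L Kpos by simp
      moreover have "(K - 1 + 1) mod K = 0" using Kpos by simp
      ultimately show ?thesis unfolding ms_def using True by simp
    next
      case False
      have "(2*i + L - 1) mod L = 2 * (i - 1) + 1"
      proof -
        have h1: "2*i + L - 1 = (2 * (i - 1) + 1) + L" using False by simp
        have h2: "2 * (i - 1) + 1 < L" using i L by simp
        show ?thesis unfolding h1 mod_add_self2 using h2 by simp
      qed
      moreover have "(i - 1 + 1) mod K = i" using False i by simp
      ultimately show ?thesis unfolding ms_def by simp
    qed
    have m2: "ms (2*i) = R 0 i" "ns (2*i) = Cc i" "ns (2*i+1) = Cc (K + u jj i)"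
      "ms (2*i+1) = R 1 ((i + 1) mod K)" unfolding ms_def ns_def by simp_all
    have "R 0 i = R 0 (K + u jj i)" using Rcong[OF cong_sym[OF B0[OF i]]] .
    moreover have "R 1 ((i + 1) mod K) = R 1 (K + u jj i)" using Rcong[OF cong_sym[OF B1[OF i]]] .
    ultimately show ?thesis using m1 m2 by simp
  qed
  have U: "(\<Union>i<L div 2. {(ms ((2*i + L - 1) mod L), ns (2*i)), (ms (2*i), ns (2*i)),
                          (ms (2*i), ns (2*i+1)), (ms (2*i+1), ns (2*i+1))})
         = {(R j l, Cc l) | j l. j < 2 \<and> l < L}"
  proof (intro Set.set_eqI iffI)
    fix x assume "x \<in> (\<Union>i<L div 2. {(ms ((2*i + L - 1) mod L), ns (2*i)), (ms (2*i), ns (2*i)),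
                          (ms (2*i), ns (2*i+1)), (ms (2*i+1), ns (2*i+1))})"
    then obtain i where i: "i < K" and x: "x \<in> {(R 1 i, Cc i), (R 0 i, Cc i), (R 0 (K + u jj i), Cc (K + u jj i)), (R 1 (K + u jj i), Cc (K + u jj i))}"
      using blk LK by auto
    have il: "i < L" "K + u jj i < L" using i u_lt[of jj i] L by auto
    have mem: "\<And>j l. j < 2 \<Longrightarrow> l < L \<Longrightarrow> (R j l, Cc l) \<in> {(R j l, Cc l) | j l. j < 2 \<and> l < L}"
      by blast
    show "x \<in> {(R j l, Cc l) | j l. j < 2 \<and> l < L}"
      using x il mem[of 1 i] mem[of 0 i] mem[of 1 "K + u jj i"] mem[of 0 "K + u jj i"] by auto
  next
    fix x assume "x \<in> {(R j l, Cc l) | j l. j < 2 \<and> l < L}"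
    then obtain j l where x: "x = (R j l, Cc l)" "j < 2" "l < L" by auto
    have j01: "j = 0 \<or> j = 1" using x(2) by auto
    show "x \<in> (\<Union>i<L div 2. {(ms ((2*i + L - 1) mod L), ns (2*i)), (ms (2*i), ns (2*i)),
                          (ms (2*i), ns (2*i+1)), (ms (2*i+1), ns (2*i+1))})"
    proof (cases "l < K")
      case True
      then have "x \<in> {(R 1 l, Cc l), (R 0 l, Cc l), (R 0 (K + u jj l), Cc (K + u jj l)), (R 1 (K + u jj l), Cc (K + u jj l))}"
        using x j01 by auto
      then show ?thesis using blk[OF True] True LK by blast
    next
      case False
      define w where "w = l - K"
      have w: "w < K" "l = K + w" using False x(3) L unfolding w_def by auto
      define i where "i = u jj w"
      have i: "i < K" "u jj i = w" unfolding i_def using u_lt u_u[OF w(1)] by auto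
      then have "x \<in> {(R 1 i, Cc i), (R 0 i, Cc i), (R 0 (K + u jj i), Cc (K + u jj i)), (R 1 (K + u jj i), Cc (K + u jj i))}"
        using x w j01 by auto
      then show ?thesis using blk[OF i(1)] i LK by blast
    qed
  qed
  have E: "Eset P L s t m' = {(R j l, Cc l) | j l. j < 2 \<and> l < L}"
    using Eset_char[OF m'] unfolding R_def Cc_def jj_def a_def .
  have U': "(\<Union>i<L div 2. {(ms ((2*i + L - 1) mod L), ns (2*i)), (ms (2*i), ns (2*i)),
                          (ms (2*i), ns (2*i+1)), (ms (2*i+1), ns (2*i+1))}) = Eset P L s t m'"
    unfolding E by (rule U)
  show ?thesis by (intro exI[of _ ms] exI[of _ ns] conjI inj1 inj2 bnd U')
qed

end

theorem lemma1:
  fixes P L :: nat and \<sigma> \<tau> :: int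
  assumes hP: "P > 2"
    and hs: "0 \<le> \<sigma>" "\<sigma> < int P" and ht: "0 \<le> \<tau>" "\<tau> < int P"
    and i: "zunit P \<sigma>" "zunit P \<tau>"
    and ii: "L = 2 * zord P \<sigma>"
    and iii: "2 \<le> zord P \<sigma>"
    and iv: "zord P \<sigma> \<noteq> card {z. 0 \<le> z \<and> z < int P \<and> zunit P z}"
    and v: "\<forall>j. 1 \<le> j \<and> j < zord P \<sigma> \<longrightarrow> zunit P ((1 - \<sigma> ^ j) mod int P)"
    and vi: "\<tau> \<notin> {\<sigma> ^ k mod int P | k. k < zord P \<sigma>}"
  shows "\<forall>m' < 2 * P. \<exists>ms ns :: nat \<Rightarrow> nat.
           inj_on ms {..<L} \<and> inj_on ns {..<L} \<and>
           (\<forall>i<L. ms i < 2 * P \<and> ns i < L * P) \<and>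
           (\<Union>i<L div 2. {(ms ((2*i + L - 1) mod L), ns (2*i)), (ms (2*i), ns (2*i)),
                          (ms (2*i), ns (2*i+1)), (ms (2*i+1), ns (2*i+1))})
           = Eset P L \<sigma> \<tau> m'"
proof (intro allI impI)
  fix m' assume m': "m' < 2 * P"
  interpret cyc P \<sigma> \<tau> "zord P \<sigma>" L
    using hP hs ht i ii iii v vi by unfold_locales auto
  show "\<exists>ms ns :: nat \<Rightarrow> nat.
           inj_on ms {..<L} \<and> inj_on ns {..<L} \<and>
           (\<forall>i<L. ms i < 2 * P \<and> ns i < L * P) \<and>
           (\<Union>i<L div 2. {(ms ((2*i + L - 1) mod L), ns (2*i)), (ms (2*i), ns (2*i)),
                          (ms (2*i), ns (2*i+1)), (ms (2*i+1), ns (2*i+1))})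
           = Eset P L \<sigma> \<tau> m'" by (rule main[OF m'])
qed

end
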